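(* Let $W$ be a real $mn\times mn$ matrix satisfying (S), (A1), (A2), (A3) from the context, and let $\Lambda=I_n\otimes\big(\tfrac1mI_m-\tfrac1{m^2}\mathbf 1_m\mathbf 1_m^T\big)$. Then there exists an $mn\times mn$ orthogonal matrix $P=[p_1,p_2,\dots,p_{mn}]$ such that (i) $\mathrm{span}\{p_{(m-1)n+k}:1\le k\le n\}=\mathrm{span}\{\varepsilon_k\otimes\mathbf 1_m:1\le k\le n\}$; (ii) $P^TW\Lambda P=\frac1m\,\mathrm{diag}(\mu_1,\dots,\mu_{(m-1)n},0,\dots,0)$ (with $n$ trailing zeros); (iii) $P^T\Lambda P=\frac1m\,\mathrm{diag}(I_{(m-1)n},O_n)$; (iv) $P^TWP=\mathrm{diag}(\mu_1,\dots,\mu_{(m-1)n},\mu_{(m-1)n+1},\dots,\mu_{mn})$; where $\mu_1/m\ge\dots\ge\mu_{(m-1)n}/m$ are the eigenvalues of $W\Lambda$ (with multiplicity) remaining after removing $n$ copies of the eigenvalue $0$, listed in descending order, and $\mu_{(m-1)n+1}\ge\dots\ge\mu_{mn}$ are the eigenvalues of $W$ (with multiplicity) other than $\mu_1,\dots,\mu_{(m-1)n}$, in descending order.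
   Context: Let $n\ge1$, $m\ge2$. $\mathbf 1_m$ is the all-ones vector in $\mathbb{R}^m$ and $\varepsilon_k$ is the $k$-th standard basis vector of $\mathbb{R}^n$; $\otimes$ is the Kronecker product. The matrix $W$ is viewed as an $n\times n$ array of $m\times m$ blocks $W_{i,k}$, and: (S) $W_{i,i}=0$; (A1) $W$ is symmetric; (A2) $W_{i,k}\mathbf 1_m=\lambda_{ik}\mathbf 1_m$ for scalars $\lambda_{ik}$; (A3) $\lambda_{ik}=\lambda_{ki}$. *)

theory Defs
  imports "Jordan_Normal_Form.Char_Poly" "Jordan_Normal_Form.VS_Connect" "HOL-Library.Multiset"
begin

definition kron_mat :: "real mat \<Rightarrow> real mat \<Rightarrow> real mat" where
  "kron_mat A B = mat (dim_row A * dim_row B) (dim_col A * dim_col B)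
     (\<lambda>(r,s). A $$ (r div dim_row B, s div dim_col B) * B $$ (r mod dim_row B, s mod dim_col B))"

definition kron_vec :: "real vec \<Rightarrow> real vec \<Rightarrow> real vec" where
  "kron_vec u v = vec (dim_vec u * dim_vec v) (\<lambda>r. u $ (r div dim_vec v) * v $ (r mod dim_vec v))"

definition ones_vec :: "nat \<Rightarrow> real vec" where
  "ones_vec m = vec m (\<lambda>_. 1)"

definition blk :: "real mat \<Rightarrow> nat \<Rightarrow> nat \<Rightarrow> nat \<Rightarrow> real mat" where
  "blk W m i k = mat m m (\<lambda>(a,b). W $$ (i * m + a, k * m + b))"

definition diag_of :: "nat \<Rightarrow> (nat \<Rightarrow> real) \<Rightarrow> real mat" where
  "diag_of N f = mat N N (\<lambda>(i,j). if i = j then f i else 0)"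

definition eigvals_mset :: "real mat \<Rightarrow> real multiset \<Rightarrow> bool" where
  "eigvals_mset A M \<longleftrightarrow> char_poly A = (\<Prod>a\<in>#M. [:- a, 1:])"

definition Lambda_mat :: "nat \<Rightarrow> nat \<Rightarrow> real mat" where
  "Lambda_mat n m = kron_mat (1\<^sub>m n)
     ((1 / real m) \<cdot>\<^sub>m 1\<^sub>m m - (1 / (real m)^2) \<cdot>\<^sub>m mat m m (\<lambda>_. 1))"

definition vspan :: "nat \<Rightarrow> real vec set \<Rightarrow> real vec set" where
  "vspan N S = module.span (class_ring :: real ring) (module_vec TYPE(real) N) S"

end

theory Submission
  imports Defs "HOL-Combinatorics.Permutations"
begin

lemma sym_real_eigen:
  fixes A :: "real mat"
  assumes A: "A \<in> carrier_mat n n" and sym: "transpose_mat A = A" and n: "n > 0"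
  shows "\<exists>e v. v \<in> carrier_vec n \<and> v \<noteq> 0\<^sub>v n \<and> A *\<^sub>v v = e \<cdot>\<^sub>v v"
proof -
  define Ac where "Ac = map_mat complex_of_real A"
  have Ac: "Ac \<in> carrier_mat n n" using A unfolding Ac_def by auto
  obtain as where cp: "char_poly Ac = (\<Prod>a\<leftarrow>as. [:- a, 1:])" and len: "length as = n"
    using char_poly_factorized[OF Ac] by blast
  from len n obtain a rest where as: "as = a # rest" by (cases as) auto
  have "poly (char_poly Ac) a = 0" unfolding cp as by simp
  hence "eigenvalue Ac a" using eigenvalue_root_char_poly[OF Ac] by simp
  then obtain v where ev: "eigenvector Ac v a" unfolding eigenvalue_def by blast
  hence v: "v \<in> carrier_vec n" and v0: "v \<noteq> 0\<^sub>v n" and Av: "Ac *\<^sub>v v = a \<cdot>\<^sub>v v"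
    using Ac unfolding eigenvector_def by auto
  have row: "(\<Sum>j<n. Ac $$ (i,j) * v $ j) = a * v $ i" if i: "i < n" for i
  proof -
    have "(Ac *\<^sub>v v) $ i = a * v $ i" using Av i v by simp
    moreover have "(Ac *\<^sub>v v) $ i = (\<Sum>j<n. Ac $$ (i,j) * v $ j)"
      using i Ac v by (simp add: scalar_prod_def row_def atLeast0LessThan)
    ultimately show ?thesis by simp
  qed
  define s where "s = (\<Sum>i<n. \<Sum>j<n. cnj (v $ i) * Ac $$ (i,j) * v $ j)"
  define r where "r = (\<Sum>i<n. cnj (v $ i) * v $ i)"
  have s_r: "s = a * r"
  proof -
    have "s = (\<Sum>i<n. cnj (v $ i) * (\<Sum>j<n. Ac $$ (i,j) * v $ j))"
      unfolding s_def by (simp add: sum_distrib_left mult.assoc)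
    also have "\<dots> = (\<Sum>i<n. cnj (v $ i) * (a * v $ i))" using row by simp
    also have "\<dots> = a * r" unfolding r_def by (simp add: sum_distrib_left algebra_simps)
    finally show ?thesis .
  qed
  have Acij: "cnj (Ac $$ (i,j)) = Ac $$ (i,j)" "Ac $$ (i,j) = Ac $$ (j,i)" if "i < n" "j < n" for i j
  proof -
    show "cnj (Ac $$ (i,j)) = Ac $$ (i,j)" using that A unfolding Ac_def by simp
    have "A $$ (i,j) = transpose_mat A $$ (i,j)" using sym by simp
    also have "\<dots> = A $$ (j,i)" using that A by simp
    finally show "Ac $$ (i,j) = Ac $$ (j,i)" using that A unfolding Ac_def by simp
  qed
  have "cnj s = (\<Sum>i<n. \<Sum>j<n. v $ i * Ac $$ (i,j) * cnj (v $ j))"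
    unfolding s_def by (simp add: Acij)
  also have "\<dots> = (\<Sum>j<n. \<Sum>i<n. v $ i * Ac $$ (i,j) * cnj (v $ j))"
    by (rule sum.swap)
  also have "\<dots> = s" unfolding s_def
    by (intro sum.cong refl, simp add: Acij(2) mult.commute mult.left_commute)
  finally have cs: "cnj s = s" .
  have rreal: "cnj r = r" unfolding r_def by (simp add: mult.commute)
  have "r \<noteq> 0"
  proof
    assume r0: "r = 0"
    have "complex_of_real (\<Sum>i<n. (cmod (v $ i))^2) = r" unfolding r_def of_real_sum
      by (intro sum.cong refl) (metis complex_norm_square mult.commute of_real_power)
    with r0 have "(\<Sum>i<n. (cmod (v $ i))^2) = 0" by (metis of_real_eq_0_iff)
    hence "\<forall>i\<in>{..<n}. (cmod (v $ i))^2 = 0" by (subst (asm) sum_nonneg_eq_0_iff) auto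
    hence "v = 0\<^sub>v n" using v by (intro eq_vecI) auto
    with v0 show False by simp
  qed
  from cs rreal s_r have "cnj a * r = a * r" by (metis complex_cnj_mult)
  with \<open>r \<noteq> 0\<close> have "cnj a = a" by simp
  hence aR: "a = complex_of_real (Re a)" by (metis Reals_cnj_iff complex_is_Real_iff of_real_Re)
  have "char_poly Ac = map_poly complex_of_real (char_poly A)"
    unfolding Ac_def by (rule of_real_hom.char_poly_hom[OF A])
  hence "complex_of_real (poly (char_poly A) (Re a)) = poly (char_poly Ac) a"
    by (subst aR, simp)
  also have "\<dots> = 0" by fact
  finally have "poly (char_poly A) (Re a) = 0" by simp
  hence "eigenvalue A (Re a)" using eigenvalue_root_char_poly[OF A] by simp
  then obtain w where "eigenvector A w (Re a)" unfolding eigenvalue_def by blast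
  thus ?thesis using A unfolding eigenvector_def by auto
qed

lemma householder:
  fixes u :: "real vec"
  assumes u: "u \<in> carrier_vec n" and n: "n > 0" and nu: "u \<bullet> u = 1"
  shows "\<exists>H. H \<in> carrier_mat n n \<and> transpose_mat H * H = 1\<^sub>m n \<and> col H 0 = u"
proof (cases "u = unit_vec n 0")
  case True
  show ?thesis by (rule exI[of _ "1\<^sub>m n"], insert True n, auto)
next
  case False
  define w where "w = u - unit_vec n 0"
  have w: "w \<in> carrier_vec n" using u unfolding w_def by auto
  have wi: "w $ i = u $ i - (if i = 0 then 1 else 0)" if "i < n" for i
    using that u unfolding w_def by auto
  define c where "c = (\<Sum>k<n. w $ k * w $ k)"
  have uu: "(\<Sum>k<n. u $ k * u $ k) = 1" using nu u by (simp add: scalar_prod_def atLeast0LessThan)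
  have c2: "c = 2 - 2 * u $ 0"
  proof -
    have "c = (\<Sum>k<n. u $ k * u $ k - (if k = 0 then 2 * u $ k - 1 else 0))"
      unfolding c_def by (intro sum.cong refl, simp add: wi algebra_simps)
    also have "\<dots> = 1 - (2 * u $ 0 - 1)" using n by (simp add: sum_subtractf uu)
    finally show ?thesis by simp
  qed
  have c0: "c \<noteq> 0"
  proof
    assume "c = 0"
    hence "\<forall>k\<in>{..<n}. w $ k * w $ k = 0" unfolding c_def
      by (subst (asm) sum_nonneg_eq_0_iff) auto
    hence "w = 0\<^sub>v n" using w by (intro eq_vecI) auto
    hence "\<forall>i<n. w $ i = 0" by auto
    hence "u = unit_vec n 0" using u wi
      by (intro eq_vecI) (auto split: if_splits)
    with False show False by simp
  qed
  define a where "a = 2 / c"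
  have ac: "a * c = 2" using c0 unfolding a_def by simp
  define H where "H = mat n n (\<lambda>(i,j). (if i = j then 1 else 0) - a * (w $ i * w $ j))"
  have H: "H \<in> carrier_mat n n" unfolding H_def by simp
  have Hij: "H $$ (i,j) = (if i = j then 1 else 0) - a * (w $ i * w $ j)" if "i < n" "j < n" for i j
    using that unfolding H_def by simp
  have HT: "transpose_mat H = H" by (rule eq_matI, auto simp: H_def)
  have wH: "(\<Sum>k<n. w $ k * H $$ (k,j)) = - w $ j" if j: "j < n" for j
  proof -
    have "(\<Sum>k<n. w $ k * H $$ (k,j)) = (\<Sum>k<n. (if k = j then w $ k else 0) - a * w $ j * (w $ k * w $ k))"
      by (intro sum.cong refl, simp add: Hij j algebra_simps)
    also have "\<dots> = w $ j - a * w $ j * c" using j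
      by (simp add: sum_subtractf sum_distrib_left[symmetric] c_def)
    also have "\<dots> = - w $ j" using ac by (simp add: algebra_simps)
    finally show ?thesis .
  qed
  have HH: "H * H = 1\<^sub>m n"
  proof (rule eq_matI)
    fix i j assume i: "i < dim_row (1\<^sub>m n)" and j: "j < dim_col (1\<^sub>m n)"
    hence i: "i < n" and j: "j < n" by auto
    have "(H * H) $$ (i,j) = (\<Sum>k<n. H $$ (i,k) * H $$ (k,j))"
      using i j H by (simp add: scalar_prod_def atLeast0LessThan)
    also have "\<dots> = (\<Sum>k<n. (if k = i then H $$ (k,j) else 0) - a * w $ i * (w $ k * H $$ (k,j)))"
      by (intro sum.cong refl, simp add: Hij i algebra_simps)
    also have "\<dots> = H $$ (i,j) - a * w $ i * (\<Sum>k<n. w $ k * H $$ (k,j))" using i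
      by (simp add: sum_subtractf sum_distrib_left[symmetric])
    also have "\<dots> = H $$ (i,j) - a * w $ i * (- w $ j)" by (simp only: wH[OF j])
    also have "\<dots> = (if i = j then 1 else 0)" using i j by (simp add: Hij algebra_simps)
    finally show "(H * H) $$ (i,j) = 1\<^sub>m n $$ (i,j)" using i j by simp
  qed (insert H, auto)
  have aw0: "a * w $ 0 = -1" using n c0 unfolding a_def by (simp add: wi c2 field_simps)
  have colH: "col H 0 = u"
  proof (rule eq_vecI)
    fix i assume "i < dim_vec u"
    hence i: "i < n" using u by simp
    have "col H 0 $ i = (if i = 0 then 1 else 0) - (a * w $ 0) * w $ i" using i n H
      by (simp add: Hij algebra_simps)
    also have "\<dots> = (if i = 0 then 1 else 0) + w $ i" by (simp add: aw0)
    also have "\<dots> = u $ i" using i by (simp add: wi)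
    finally show "col H 0 $ i = u $ i" .
  qed (insert H u, auto)
  show ?thesis using H HT HH colH by auto
qed

lemma bd_mult:
  assumes "A1 \<in> carrier_mat k k" "D1 \<in> carrier_mat l l" "A2 \<in> carrier_mat k k" "D2 \<in> carrier_mat l l"
  shows "four_block_mat A1 (0\<^sub>m k l) (0\<^sub>m l k) D1 * four_block_mat A2 (0\<^sub>m k l) (0\<^sub>m l k) D2
       = four_block_mat (A1 * A2) (0\<^sub>m k l) (0\<^sub>m l k) (D1 * D2)"
  by (subst mult_four_block_mat[of _ k k _ l _ l _ _ k _ l], insert assms, auto)

lemma bd_transpose:
  assumes "A1 \<in> carrier_mat k k" "D1 \<in> carrier_mat l l"
  shows "transpose_mat (four_block_mat A1 (0\<^sub>m k l) (0\<^sub>m l k) D1)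
       = four_block_mat (transpose_mat A1) (0\<^sub>m k l) (0\<^sub>m l k) (transpose_mat D1)"
  by (subst transpose_four_block_mat[of _ k k _ l _ l], insert assms, auto)

lemma bd_carrier:
  assumes "A1 \<in> carrier_mat k k" "D1 \<in> carrier_mat l l"
  shows "four_block_mat A1 (0\<^sub>m k l) (0\<^sub>m l k) D1 \<in> carrier_mat (k + l) (k + l)"
  using assms by auto

lemma bd_diag:
  "four_block_mat (diag_of k f) (0\<^sub>m k l) (0\<^sub>m l k) (diag_of l g)
   = diag_of (k + l) (\<lambda>i. if i < k then f i else g (i - k))"
  by (rule eq_matI, auto simp: diag_of_def)

lemma spectral:
  fixes A :: "real mat"
  assumes "A \<in> carrier_mat n n" "transpose_mat A = A"
  shows "\<exists>Q d. Q \<in> carrier_mat n n \<and> transpose_mat Q * Q = 1\<^sub>m n \<and> transpose_mat Q * A * Q = diag_of n d"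
  using assms
proof (induction n arbitrary: A)
  case 0
  show ?case by (rule exI[of _ "1\<^sub>m 0"], rule exI[of _ "\<lambda>_. 0"], insert 0, auto intro!: eq_matI simp: diag_of_def)
next
  case (Suc n1 A)
  let ?n = "Suc n1"
  have A: "A \<in> carrier_mat ?n ?n" and sym: "transpose_mat A = A" by fact+
  obtain e v where v: "v \<in> carrier_vec ?n" and v0: "v \<noteq> 0\<^sub>v ?n" and Av: "A *\<^sub>v v = e \<cdot>\<^sub>v v"
    using sym_real_eigen[OF A sym] by auto
  have vv: "v \<bullet> v > 0"
  proof -
    have ge: "v \<bullet> v = (\<Sum>k<?n. v $ k * v $ k)" using v by (simp add: scalar_prod_def atLeast0LessThan)
    have "v \<bullet> v \<noteq> 0"
    proof
      assume "v \<bullet> v = 0"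
      hence "\<forall>k\<in>{..<?n}. v $ k * v $ k = 0" unfolding ge
        by (subst (asm) sum_nonneg_eq_0_iff) auto
      hence "v = 0\<^sub>v ?n" using v by (intro eq_vecI) auto
      with v0 show False by simp
    qed
    moreover have "v \<bullet> v \<ge> 0" unfolding ge by (intro sum_nonneg) auto
    ultimately show ?thesis by simp
  qed
  define u where "u = (1 / sqrt (v \<bullet> v)) \<cdot>\<^sub>v v"
  have u: "u \<in> carrier_vec ?n" using v unfolding u_def by simp
  have uu: "u \<bullet> u = 1" using vv v unfolding u_def
    by (simp add: scalar_prod_smult_left scalar_prod_smult_right)
  have Au: "A *\<^sub>v u = e \<cdot>\<^sub>v u" unfolding u_def using A v Av
    by (simp add: mult_mat_vec smult_smult_assoc mult.commute)
  obtain H where H: "H \<in> carrier_mat ?n ?n" and HH: "transpose_mat H * H = 1\<^sub>m ?n" and colH: "col H 0 = u"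
    using householder[OF u _ uu] by auto
  define A' where "A' = transpose_mat H * A * H"
  have A': "A' \<in> carrier_mat ?n ?n" unfolding A'_def using H A by auto
  have symA': "transpose_mat A' = A'"
  proof -
    have "transpose_mat A' = transpose_mat H * transpose_mat (transpose_mat H * A)"
      unfolding A'_def by (rule transpose_mult[of _ ?n ?n], insert H A, auto)
    also have "transpose_mat (transpose_mat H * A) = transpose_mat A * H"
      by (subst transpose_mult[of _ ?n ?n], insert H A, auto)
    also have "transpose_mat H * (transpose_mat A * H) = A'" unfolding A'_def sym
      using H A by (simp add: assoc_mult_mat[of _ ?n ?n _ ?n _ ?n])
    finally show ?thesis .
  qed
  have colA': "col A' 0 = e \<cdot>\<^sub>v unit_vec ?n 0"
  proof -
    have "col A' 0 = (transpose_mat H * A) *\<^sub>v col H 0" unfolding A'_def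
      by (rule col_mult2[of _ ?n ?n _ ?n], insert H A, auto)
    also have "\<dots> = transpose_mat H *\<^sub>v (e \<cdot>\<^sub>v u)" using H A u by (simp add: colH Au)
    also have "\<dots> = e \<cdot>\<^sub>v (transpose_mat H *\<^sub>v col H 0)" using H u colH by (simp add: mult_mat_vec)
    also have "transpose_mat H *\<^sub>v col H 0 = col (transpose_mat H * H) 0" by (rule col_mult2[symmetric], insert H, auto)
    also have "\<dots> = unit_vec ?n 0" unfolding HH by simp
    finally show ?thesis .
  qed
  have A'i0: "A' $$ (i, 0) = (if i = 0 then e else 0)" if "i < ?n" for i
  proof -
    have "A' $$ (i, 0) = col A' 0 $ i" using that A' by simp
    thus ?thesis using that by (simp add: colA')
  qed
  have A'0j: "A' $$ (0, j) = (if j = 0 then e else 0)" if "j < ?n" for j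
  proof -
    have "A' $$ (0, j) = transpose_mat A' $$ (j, 0)" using that A' by simp
    thus ?thesis using that symA' A'i0 by simp
  qed
  define A3 where "A3 = mat n1 n1 (\<lambda>(i,j). A' $$ (Suc i, Suc j))"
  have A3: "A3 \<in> carrier_mat n1 n1" unfolding A3_def by simp
  have symA3: "transpose_mat A3 = A3"
  proof (rule eq_matI)
    fix i j assume "i < dim_row A3" "j < dim_col A3"
    hence i: "i < n1" and j: "j < n1" unfolding A3_def by auto
    have "A' $$ (Suc j, Suc i) = transpose_mat A' $$ (Suc i, Suc j)" using i j A' by simp
    thus "transpose_mat A3 $$ (i, j) = A3 $$ (i, j)" using i j symA' unfolding A3_def by simp
  qed (auto simp: A3_def)
  from Suc.IH[OF A3 symA3] obtain Q3 d3 where Q3: "Q3 \<in> carrier_mat n1 n1"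
    and QQ3: "transpose_mat Q3 * Q3 = 1\<^sub>m n1" and QAQ3: "transpose_mat Q3 * A3 * Q3 = diag_of n1 d3"
    by blast
  define E where "E = mat 1 1 (\<lambda>_. e)"
  have E: "E \<in> carrier_mat 1 1" unfolding E_def by simp
  have A'b: "A' = four_block_mat E (0\<^sub>m 1 n1) (0\<^sub>m n1 1) A3"
  proof (rule eq_matI)
    fix i j assume "i < dim_row (four_block_mat E (0\<^sub>m 1 n1) (0\<^sub>m n1 1) A3)"
      "j < dim_col (four_block_mat E (0\<^sub>m 1 n1) (0\<^sub>m n1 1) A3)"
    hence i: "i < ?n" and j: "j < ?n" using E A3 by auto
    show "A' $$ (i, j) = four_block_mat E (0\<^sub>m 1 n1) (0\<^sub>m n1 1) A3 $$ (i, j)"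
      using i j E A3 A'i0 A'0j unfolding E_def A3_def
      by (cases i; cases j; auto)
  qed (insert A' E A3, auto)
  define R where "R = four_block_mat (1\<^sub>m 1) (0\<^sub>m 1 n1) (0\<^sub>m n1 1) Q3"
  have R: "R \<in> carrier_mat ?n ?n" unfolding R_def using Q3 bd_carrier[of "1\<^sub>m 1" 1 Q3 n1] by simp
  define Q where "Q = H * R"
  have Q: "Q \<in> carrier_mat ?n ?n" unfolding Q_def using H R by simp
  have RT: "transpose_mat R = four_block_mat (1\<^sub>m 1) (0\<^sub>m 1 n1) (0\<^sub>m n1 1) (transpose_mat Q3)"
    unfolding R_def by (subst bd_transpose, insert Q3, auto)
  have QT: "transpose_mat Q = transpose_mat R * transpose_mat H"
    unfolding Q_def by (rule transpose_mult[OF H R])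
  have "transpose_mat Q * Q = transpose_mat R * (transpose_mat H * H) * R"
    unfolding QT unfolding Q_def using H R by (simp add: assoc_mult_mat[of _ ?n ?n _ ?n _ ?n])
  also have "\<dots> = transpose_mat R * R" unfolding HH using R by simp
  also have "\<dots> = four_block_mat (1\<^sub>m 1 * 1\<^sub>m 1) (0\<^sub>m 1 n1) (0\<^sub>m n1 1) (transpose_mat Q3 * Q3)"
    unfolding RT unfolding R_def by (rule bd_mult, insert Q3, auto)
  also have "\<dots> = 1\<^sub>m ?n" unfolding QQ3 by simp
  finally have QQ: "transpose_mat Q * Q = 1\<^sub>m ?n" .
  have "transpose_mat Q * A * Q = transpose_mat R * A' * R"
    unfolding QT unfolding Q_def A'_def using H R A by (simp add: assoc_mult_mat[of _ ?n ?n _ ?n _ ?n])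
  also have "\<dots> = four_block_mat (1\<^sub>m 1 * E * 1\<^sub>m 1) (0\<^sub>m 1 n1) (0\<^sub>m n1 1) (transpose_mat Q3 * A3 * Q3)"
    unfolding RT unfolding R_def A'b
    using bd_mult[of "1\<^sub>m 1" 1 "transpose_mat Q3" n1 E A3] bd_mult[of "1\<^sub>m 1 * E" 1 "transpose_mat Q3 * A3" n1 "1\<^sub>m 1" Q3]
      Q3 E A3 by simp
  also have "1\<^sub>m 1 * E * 1\<^sub>m 1 = diag_of 1 (\<lambda>_. e)" using E unfolding E_def
    by (auto intro!: eq_matI simp: diag_of_def)
  also have "transpose_mat Q3 * A3 * Q3 = diag_of n1 d3" by (rule QAQ3)
  also have "four_block_mat (diag_of 1 (\<lambda>_. e)) (0\<^sub>m 1 n1) (0\<^sub>m n1 1) (diag_of n1 d3) =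
      diag_of ?n (\<lambda>i. if i < 1 then e else d3 (i - 1))" by (subst bd_diag, simp)
  finally show ?case using Q QQ by blast
qed

lemma perm_right:
  fixes X :: "real mat"
  assumes X: "X \<in> carrier_mat n n" and p: "p permutes {..<n}"
  shows "X * mat n n (\<lambda>(i,j). if i = p j then 1 else 0) = mat n n (\<lambda>(a,j). X $$ (a, p j))"
proof (rule eq_matI)
  fix a j assume "a < dim_row (mat n n (\<lambda>(a,j). X $$ (a, p j)))" "j < dim_col (mat n n (\<lambda>(a,j). X $$ (a, p j)))"
  hence a: "a < n" and j: "j < n" by auto
  have pj: "p j < n" using permutes_in_image[OF p] j by auto
  have "(X * mat n n (\<lambda>(i,j). if i = p j then 1 else 0)) $$ (a,j) = (\<Sum>k\<in>{0..<n}. X $$ (a,k) * (if k = p j then 1 else 0))"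
    using X a j by (simp add: scalar_prod_def)
  also have "\<dots> = X $$ (a, p j)" using pj by (simp add: if_distrib cong: if_cong)
  finally show "(X * mat n n (\<lambda>(i,j). if i = p j then 1 else 0)) $$ (a,j) = mat n n (\<lambda>(a,j). X $$ (a, p j)) $$ (a,j)"
    using a j by simp
qed (insert X, auto)

lemma perm_left:
  fixes X :: "real mat"
  assumes X: "X \<in> carrier_mat n n" and p: "p permutes {..<n}"
  shows "transpose_mat (mat n n (\<lambda>(i,j). if i = p j then 1 else 0)) * X = mat n n (\<lambda>(i,b). X $$ (p i, b))"
proof (rule eq_matI)
  fix i b assume "i < dim_row (mat n n (\<lambda>(i,b). X $$ (p i, b)))" "b < dim_col (mat n n (\<lambda>(i,b). X $$ (p i, b)))"
  hence i: "i < n" and b: "b < n" by auto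
  have pi: "p i < n" using permutes_in_image[OF p] i by auto
  have "(transpose_mat (mat n n (\<lambda>(i,j). if i = p j then 1 else 0)) * X) $$ (i,b) = (\<Sum>k\<in>{0..<n}. (if k = p i then 1 else 0) * X $$ (k,b))"
    using X i b by (simp add: scalar_prod_def)
  also have "\<dots> = (\<Sum>k\<in>{0..<n}. if k = p i then X $$ (k,b) else 0)" by (rule sum.cong, auto)
  also have "\<dots> = X $$ (p i, b)" using pi by simp
  finally show "(transpose_mat (mat n n (\<lambda>(i,j). if i = p j then 1 else 0)) * X) $$ (i,b) = mat n n (\<lambda>(i,b). X $$ (p i, b)) $$ (i,b)"
    using i b by simp
qed (insert X, auto)

lemma perm_conj:
  fixes X :: "real mat"
  assumes X: "X \<in> carrier_mat n n" and p: "p permutes {..<n}"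
  shows "transpose_mat (mat n n (\<lambda>(i,j). if i = p j then 1 else 0)) * X * mat n n (\<lambda>(i,j). if i = p j then 1 else 0)
     = mat n n (\<lambda>(i,j). X $$ (p i, p j))"
proof -
  have pi: "p i < n" if "i < n" for i using permutes_in_image[OF p] that by auto
  show ?thesis by (subst perm_left[OF X p], subst perm_right[OF _ p], simp, rule eq_matI, auto simp: pi)
qed

lemma spectral_sorted:
  fixes A :: "real mat"
  assumes A: "A \<in> carrier_mat n n" and sym: "transpose_mat A = A"
  shows "\<exists>Q d. Q \<in> carrier_mat n n \<and> transpose_mat Q * Q = 1\<^sub>m n \<and> transpose_mat Q * A * Q = diag_of n d
     \<and> (\<forall>i j. i \<le> j \<and> j < n \<longrightarrow> d j \<le> d i)"
proof -
  obtain Q d where Q: "Q \<in> carrier_mat n n" and QQ: "transpose_mat Q * Q = 1\<^sub>m n"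
    and QAQ: "transpose_mat Q * A * Q = diag_of n d" using spectral[OF A sym] by blast
  define xs where "xs = map d [0..<n]"
  define ys where "ys = sort_key uminus xs"
  have "mset ys = mset xs" unfolding ys_def by simp
  then obtain p where p: "p permutes {..<length xs}" and pl: "permute_list p xs = ys"
    using mset_eq_permutation by metis
  have p': "p permutes {..<n}" using p unfolding xs_def by simp
  have pn: "p i < n" if "i < n" for i using permutes_in_image[OF p'] that by auto
  have ysi: "ys ! i = d (p i)" if "i < n" for i
  proof -
    have "ys ! i = xs ! p i" unfolding pl[symmetric] by (rule permute_list_nth[OF p], insert that, simp add: xs_def)
    thus ?thesis using pn[OF that] by (simp add: xs_def)
  qed
  have sorted: "sorted (map uminus ys)" unfolding ys_def by (rule sorted_sort_key)
  have lys: "length ys = n" unfolding ys_def xs_def by simp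
  define Pm where "Pm = mat n n (\<lambda>(i,j). if i = p j then (1::real) else 0)"
  have Pm: "Pm \<in> carrier_mat n n" unfolding Pm_def by simp
  define Q' where "Q' = Q * Pm"
  have Q': "Q' \<in> carrier_mat n n" unfolding Q'_def using Q Pm by simp
  have QT: "transpose_mat Q' = transpose_mat Pm * transpose_mat Q"
    unfolding Q'_def by (rule transpose_mult[OF Q Pm])
  have conj: "transpose_mat Q' * X * Q' = mat n n (\<lambda>(i,j). (transpose_mat Q * X * Q) $$ (p i, p j))"
    if X: "X \<in> carrier_mat n n" for X
  proof -
    have "transpose_mat Q' * X * Q' = transpose_mat Pm * (transpose_mat Q * X * Q) * Pm"
      unfolding QT unfolding Q'_def using Q Pm X by (simp add: assoc_mult_mat[of _ n n _ n _ n])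
    also have "\<dots> = mat n n (\<lambda>(i,j). (transpose_mat Q * X * Q) $$ (p i, p j))"
      unfolding Pm_def by (rule perm_conj[OF _ p'], insert Q X, auto)
    finally show ?thesis .
  qed
  have "transpose_mat Q' * Q' = transpose_mat Q' * 1\<^sub>m n * Q'" using Q' by simp
  also have "\<dots> = 1\<^sub>m n" unfolding conj[OF one_carrier_mat] using Q QQ pn
    by (auto intro!: eq_matI simp: inj_eq[OF permutes_inj[OF p']])
  finally have QQ': "transpose_mat Q' * Q' = 1\<^sub>m n" .
  have QAQ': "transpose_mat Q' * A * Q' = diag_of n (\<lambda>i. d (p i))" unfolding conj[OF A] QAQ
    using pn by (auto intro!: eq_matI simp: diag_of_def inj_eq[OF permutes_inj[OF p']])
  have mono: "d (p j) \<le> d (p i)" if "i \<le> j" "j < n" for i j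
  proof -
    have "map uminus ys ! i \<le> map uminus ys ! j" using sorted_nth_mono[OF sorted, of i j] that lys by simp
    thus ?thesis using that lys ysi by simp
  qed
  show ?thesis using Q' QQ' QAQ' mono by blast
qed

lemma sum_split_add: "(\<Sum>s<K + (n::nat). f s) = (\<Sum>s<K. f s) + (\<Sum>j<n. f (K + j))"
  by (induction n) (auto simp: add.assoc)

lemma sum_div_block:
  fixes f :: "nat \<Rightarrow> 'a :: comm_monoid_add"
  assumes l: "l < n"
  shows "(\<Sum>q<n*m. if q div m = l then f q else 0) = (\<Sum>b<m. f (l*m+b))"
  using l
proof (induction n)
  case 0 thus ?case by simp
next
  case (Suc n)
  have eq: "(\<Sum>q<Suc n*m. if q div m = l then f q else 0) =
     (\<Sum>q<n*m. if q div m = l then f q else 0) + (\<Sum>b<m. if (n*m+b) div m = l then f (n*m+b) else 0)"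
    by (subst sum_split_add[symmetric]) (simp add: add.commute)
  have dv: "(n*m+b) div m = n" if "b < m" for b using that by simp
  show ?case
  proof (cases "l < n")
    case True
    thus ?thesis unfolding eq using Suc.IH dv by simp
  next
    case False
    with Suc.prems have ln: "l = n" by simp
    have "(\<Sum>q<n*m. if q div m = l then f q else 0) = 0"
    proof (rule sum.neutral, intro ballI)
      fix q assume "q \<in> {..<n*m}"
      hence "q div m < n" by (simp add: less_mult_imp_div_less)
      thus "(if q div m = l then f q else 0) = 0" using ln by simp
    qed
    thus ?thesis unfolding eq using dv ln by simp
  qed
qed

lemma kron_unit_index:
  assumes y: "y \<in> carrier_vec m" and r: "r < n * m" and k: "k < n"
  shows "kron_vec (unit_vec n k) y $ r = (if r div m = k then y $ (r mod m) else 0)"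
proof -
  have m: "m > 0" using r by (cases m) auto
  have "r div m < n" using r by (simp add: less_mult_imp_div_less)
  thus ?thesis using y r unfolding kron_vec_def by (auto simp: unit_vec_def)
qed

lemma kron_unit_carrier: "y \<in> carrier_vec m \<Longrightarrow> kron_vec (unit_vec n k) y \<in> carrier_vec (m * n)"
  unfolding kron_vec_def by (simp add: mult.commute)

lemma core:
  fixes M :: "real mat"
  assumes M: "M \<in> carrier_mat (m*n) (m*n)" and k: "k < n" and l: "l < n"
    and y: "y \<in> carrier_vec m" and y': "y' \<in> carrier_vec m"
  shows "kron_vec (unit_vec n k) y \<bullet> (M *\<^sub>v kron_vec (unit_vec n l) y') = y \<bullet> (blk M m k l *\<^sub>v y')"
proof -
  let ?x = "kron_vec (unit_vec n k) y" and ?z = "kron_vec (unit_vec n l) y'"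
  have x: "?x \<in> carrier_vec (m*n)" and z: "?z \<in> carrier_vec (m*n)" using kron_unit_carrier y y' by auto
  have Mz: "(M *\<^sub>v ?z) $ r = (\<Sum>b<m. M $$ (r, l*m+b) * y' $ b)" if r: "r < m*n" for r
  proof -
    have "(M *\<^sub>v ?z) $ r = (\<Sum>q<n*m. M $$ (r,q) * ?z $ q)"
      using M z r by (simp add: scalar_prod_def atLeast0LessThan mult.commute[of n m])
    also have "\<dots> = (\<Sum>q<n*m. if q div m = l then M $$ (r,q) * y' $ (q mod m) else 0)"
      by (intro sum.cong refl, simp add: kron_unit_index[OF y'] l)
    also have "\<dots> = (\<Sum>b<m. M $$ (r, l*m+b) * y' $ b)"
      by (subst sum_div_block[OF l], intro sum.cong refl, simp)
    finally show ?thesis .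
  qed
  have "?x \<bullet> (M *\<^sub>v ?z) = (\<Sum>r<n*m. ?x $ r * (M *\<^sub>v ?z) $ r)"
    using x M by (simp add: scalar_prod_def atLeast0LessThan mult.commute[of n m])
  also have "\<dots> = (\<Sum>r<n*m. if r div m = k then y $ (r mod m) * (M *\<^sub>v ?z) $ r else 0)"
    by (intro sum.cong refl, simp add: kron_unit_index[OF y] k)
  also have "\<dots> = (\<Sum>a<m. y $ a * (M *\<^sub>v ?z) $ (k*m+a))"
    by (subst sum_div_block[OF k], intro sum.cong refl, simp)
  also have "\<dots> = (\<Sum>a<m. y $ a * (\<Sum>b<m. M $$ (k*m+a, l*m+b) * y' $ b))"
  proof (intro sum.cong refl)
    fix a assume a: "a \<in> {..<m}"
    have "k*m+a < m*n"
    proof -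
      have "k*m+a < k*m + m" using a by simp
      also have "\<dots> = Suc k * m" by simp
      also have "\<dots> \<le> n * m" using k by (intro mult_le_mono1) simp
      finally show ?thesis by (simp add: mult.commute)
    qed
    thus "y $ a * (M *\<^sub>v ?z) $ (k*m+a) = y $ a * (\<Sum>b<m. M $$ (k*m+a, l*m+b) * y' $ b)"
      by (simp add: Mz)
  qed
  also have "\<dots> = y \<bullet> (blk M m k l *\<^sub>v y')"
    using y y' by (simp add: scalar_prod_def atLeast0LessThan blk_def mult.commute)
  finally show ?thesis .
qed

locale blocks =
  fixes n m :: nat and H :: "real mat"
  assumes m: "m > 0" and H: "H \<in> carrier_mat m m" and HH: "transpose_mat H * H = 1\<^sub>m m"
    and H0: "col H 0 = (1 / sqrt m) \<cdot>\<^sub>v ones_vec m"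
begin

definition K where "K = (m - 1) * n"
definition kk where "kk s = (if s < K then s mod n else s - K)"
definition jj where "jj s = (if s < K then s div n + 1 else 0)"
definition U where "U = mat (m*n) (m*n) (\<lambda>(r,s). kron_vec (unit_vec n (kk s)) (col H (jj s)) $ r)"

lemma N_eq: "m * n = K + n"
proof -
  have "m = (m - 1) + 1" using m by simp
  hence "m * n = (m - 1) * n + n" by (metis mult.left_neutral add_mult_distrib)
  thus ?thesis unfolding K_def .
qed

lemma kk_lt: "s < m * n \<Longrightarrow> kk s < n"
  unfolding kk_def using N_eq by (cases "n = 0") auto

lemma jj_lt: "s < m * n \<Longrightarrow> jj s < m"
proof -
  assume s: "s < m * n"
  show ?thesis
  proof (cases "s < K")
    case True
    hence "s div n < m - 1" unfolding K_def by (simp add: less_mult_imp_div_less)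
    thus ?thesis using True unfolding jj_def by simp
  qed (insert m, auto simp: jj_def)
qed

lemma jj0: "jj s = 0 \<longleftrightarrow> \<not> s < K" unfolding jj_def by auto

lemma kj_inj: assumes "s < m*n" "t < m*n" "kk s = kk t" "jj s = jj t" shows "s = t"
proof (cases "s < K")
  case True
  with assms jj0 have tK: "t < K" by metis
  with True assms have "s mod n = t mod n" "s div n = t div n" unfolding kk_def jj_def by auto
  thus ?thesis by (metis div_mod_decomp)
next
  case False
  with assms jj0 have "\<not> t < K" by metis
  with False assms show ?thesis unfolding kk_def by auto
qed

lemma kk_K: "j < n \<Longrightarrow> kk (K + j) = j" unfolding kk_def by auto
lemma jj_K: "jj (K + j) = 0" unfolding jj_def by auto

lemma colH: "j < m \<Longrightarrow> col H j \<in> carrier_vec m" using H by auto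

lemma U: "U \<in> carrier_mat (m*n) (m*n)" unfolding U_def by simp

lemma colU: assumes s: "s < m * n" shows "col U s = kron_vec (unit_vec n (kk s)) (col H (jj s))"
proof -
  have "kron_vec (unit_vec n (kk s)) (col H (jj s)) \<in> carrier_vec (m*n)"
    by (rule kron_unit_carrier, rule colH, rule jj_lt[OF s])
  thus ?thesis using s unfolding U_def by (auto intro!: eq_vecI)
qed

lemma TMT: assumes X: "X \<in> carrier_mat nr nc" and M: "M \<in> carrier_mat nr nr" and s: "s < nc" and t: "t < nc"
  shows "(transpose_mat X * M * X) $$ (s,t) = col X s \<bullet> (M *\<^sub>v col X t)"
proof -
  have "transpose_mat X * M * X = transpose_mat X * (M * X)" using X M by (simp add: assoc_mult_mat[of _ nc nr _ nr _ nc])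
  moreover have "(transpose_mat X * (M * X)) $$ (s,t) = col X s \<bullet> (M *\<^sub>v col X t)"
  proof -
    have "(transpose_mat X * (M * X)) $$ (s,t) = row (transpose_mat X) s \<bullet> col (M * X) t"
      by (rule index_mult_mat(1), insert X M s t, auto)
    also have "col (M * X) t = M *\<^sub>v col X t" by (rule col_mult2, insert X M t, auto)
    also have "row (transpose_mat X) s = col X s" by (rule row_transpose, insert X s, auto)
    finally show ?thesis .
  qed
  ultimately show ?thesis by simp
qed

lemma UMU: assumes M: "M \<in> carrier_mat (m*n) (m*n)" and s: "s < m*n" and t: "t < m*n"
  shows "(transpose_mat U * M * U) $$ (s,t) = col H (jj s) \<bullet> (blk M m (kk s) (kk t) *\<^sub>v col H (jj t))"
  unfolding TMT[OF U M s t] colU[OF s] colU[OF t]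
  by (rule core[OF M kk_lt[OF s] kk_lt[OF t] colH[OF jj_lt[OF s]] colH[OF jj_lt[OF t]]])

lemma colH_dot: assumes "i < m" "j < m" shows "col H i \<bullet> col H j = (if i = j then 1 else 0)"
proof -
  have "(transpose_mat H * H) $$ (i,j) = col H i \<bullet> col H j" using assms H by simp
  thus ?thesis unfolding HH using assms by simp
qed

lemma blk_one: assumes "k < n" "l < n"
  shows "blk (1\<^sub>m (m*n)) m k l = (if k = l then 1\<^sub>m m else 0\<^sub>m m m)"
proof -
  have lt: "k*m+a < m*n" if "a < m" for a
  proof -
    have "k*m+a < k*m + m" using that by simp
    also have "\<dots> = Suc k * m" by simp
    also have "\<dots> \<le> n * m" using assms by (intro mult_le_mono1) simp
    finally show ?thesis by (simp add: mult.commute)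
  qed
  have lt2: "l*m+a < m*n" if "a < m" for a
  proof -
    have "l*m+a < l*m + m" using that by simp
    also have "\<dots> = Suc l * m" by simp
    also have "\<dots> \<le> n * m" using assms by (intro mult_le_mono1) simp
    finally show ?thesis by (simp add: mult.commute)
  qed
  have eq: "(k*m+a = l*m+b) \<longleftrightarrow> k = l \<and> a = b" if "a < m" "b < m" for a b
    using that by (metis add_right_cancel div_mult_self1 mod_mult_self3 div_less mod_less add_0 m less_not_refl2)
  show ?thesis unfolding blk_def by (rule eq_matI, auto simp: lt lt2 eq)
qed

lemma zero_mv: "x \<in> carrier_vec m \<Longrightarrow> y \<in> carrier_vec m \<Longrightarrow> x \<bullet> (0\<^sub>m m m *\<^sub>v (y :: real vec)) = 0"
proof -
  assume x: "x \<in> carrier_vec m" and y: "y \<in> carrier_vec m"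
  have "0\<^sub>m m m *\<^sub>v y = 0\<^sub>v m" using y by (intro eq_vecI) (auto simp: scalar_prod_def)
  thus ?thesis using x by simp
qed

lemma UU: "transpose_mat U * U = 1\<^sub>m (m*n)"
proof (rule eq_matI)
  fix s t assume "s < dim_row (1\<^sub>m (m*n))" "t < dim_col (1\<^sub>m (m*n))"
  hence s: "s < m*n" and t: "t < m*n" by auto
  have "transpose_mat U * U = transpose_mat U * 1\<^sub>m (m*n) * U" using U by simp
  hence "(transpose_mat U * U) $$ (s,t) = col H (jj s) \<bullet> (blk (1\<^sub>m (m*n)) m (kk s) (kk t) *\<^sub>v col H (jj t))"
    using UMU[OF one_carrier_mat s t] by simp
  also have "\<dots> = (if s = t then 1 else 0)"
    using kj_inj[OF s t] kk_lt[OF s] kk_lt[OF t] jj_lt[OF s] jj_lt[OF t] colH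
    by (auto simp: blk_one colH_dot zero_mv)
  finally show "(transpose_mat U * U) $$ (s,t) = 1\<^sub>m (m*n) $$ (s,t)" using s t by simp
qed (insert U, auto)

end

lemma sym_conj: assumes X: "X \<in> carrier_mat nr nc" and M: "(M :: real mat) \<in> carrier_mat nr nr"
  and sym: "transpose_mat M = M"
  shows "transpose_mat (transpose_mat X * M * X) = transpose_mat X * M * X"
proof -
  have "transpose_mat (transpose_mat X * M * X) = transpose_mat X * transpose_mat (transpose_mat X * M)"
    by (rule transpose_mult[of _ nc nr], insert X M, auto)
  also have "transpose_mat (transpose_mat X * M) = transpose_mat M * X"
    by (subst transpose_mult[of _ nc nr], insert X M, auto)
  also have "transpose_mat X * (transpose_mat M * X) = transpose_mat X * M * X" unfolding sym
    using X M by (simp add: assoc_mult_mat[of _ nc nr _ nr _ nc])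
  finally show ?thesis .
qed

context blocks
begin

lemma ones_H0: "ones_vec m = sqrt m \<cdot>\<^sub>v col H 0"
  unfolding H0 using m by (auto intro!: eq_vecI simp: ones_vec_def)

lemma ones_dot: assumes j: "j < m" shows "ones_vec m \<bullet> col H j = (if j = 0 then sqrt m else 0)"
  unfolding ones_H0 using j m H by (simp add: colH_dot)

lemma UWU_zero:
  assumes W: "W \<in> carrier_mat (m*n) (m*n)" and sym: "transpose_mat W = W"
    and A2: "\<forall>i<n. \<forall>k<n. blk W m i k *\<^sub>v ones_vec m = lam i k \<cdot>\<^sub>v ones_vec m"
    and s: "s < K" and t: "\<not> t < K" "t < m*n"
  shows "(transpose_mat U * W * U) $$ (s,t) = 0" "(transpose_mat U * W * U) $$ (t,s) = 0"
proof -
  have s': "s < m*n" using s N_eq by simp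
  have jt: "jj t = 0" using t jj0 by simp
  have js: "jj s \<noteq> 0" using s jj0 by simp
  define B where "B = blk W m (kk s) (kk t)"
  have B: "B \<in> carrier_mat m m" unfolding B_def blk_def by simp
  have "B *\<^sub>v col H 0 = (1 / sqrt m) \<cdot>\<^sub>v (B *\<^sub>v ones_vec m)" unfolding H0 using B
    by (simp add: mult_mat_vec ones_vec_def)
  also have "B *\<^sub>v ones_vec m = lam (kk s) (kk t) \<cdot>\<^sub>v ones_vec m"
    unfolding B_def using A2 kk_lt[OF s'] kk_lt[OF t(2)] by simp
  also have "(1 / sqrt m) \<cdot>\<^sub>v (lam (kk s) (kk t) \<cdot>\<^sub>v ones_vec m) = lam (kk s) (kk t) \<cdot>\<^sub>v col H 0"
    unfolding H0 by (auto intro!: eq_vecI simp: ones_vec_def)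
  finally have Bv: "B *\<^sub>v col H 0 = lam (kk s) (kk t) \<cdot>\<^sub>v col H 0" .
  have "(transpose_mat U * W * U) $$ (s,t) = col H (jj s) \<bullet> (B *\<^sub>v col H 0)"
    unfolding UMU[OF W s' t(2)] B_def jt ..
  also have "\<dots> = lam (kk s) (kk t) * (col H (jj s) \<bullet> col H 0)" unfolding Bv
    using colH[OF jj_lt[OF s']] colH[OF m] by simp
  also have "\<dots> = 0" using js jj_lt[OF s'] m by (simp add: colH_dot)
  finally show st: "(transpose_mat U * W * U) $$ (s,t) = 0" .
  have "(transpose_mat U * W * U) $$ (t,s) = transpose_mat (transpose_mat U * W * U) $$ (s,t)"
    using U W s' t by simp
  also have "\<dots> = 0" unfolding sym_conj[OF U W sym] by (rule st)
  finally show "(transpose_mat U * W * U) $$ (t,s) = 0" .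
qed

definition C where "C = (1 / real m) \<cdot>\<^sub>m 1\<^sub>m m - (1 / (real m)^2) \<cdot>\<^sub>m mat m m (\<lambda>_. 1)"

lemma Lam: "Lambda_mat n m \<in> carrier_mat (m*n) (m*n)"
  unfolding Lambda_mat_def kron_mat_def by (simp add: mult.commute)

lemma blk_Lam: assumes k: "k < n" and l: "l < n"
  shows "blk (Lambda_mat n m) m k l = (if k = l then C else 0\<^sub>m m m)"
proof -
  have lt: "k*m+a < n*m" if "a < m" "k < n" for a k
  proof -
    have "k*m+a < k*m + m" using that by simp
    also have "\<dots> = Suc k * m" by simp
    also have "\<dots> \<le> n * m" using that by (intro mult_le_mono1) simp
    finally show ?thesis .
  qed
  have dm: "(k*m+a) div m = k" "(k*m+a) mod m = a" if "a < m" for a k using that by auto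
  show ?thesis unfolding blk_def Lambda_mat_def kron_mat_def C_def
    by (rule eq_matI, auto simp: lt k l dm)
qed

lemma C_dot: assumes x: "x \<in> carrier_vec m" and y: "y \<in> carrier_vec m"
  shows "x \<bullet> (C *\<^sub>v y) = (1 / real m) * (x \<bullet> y) - (1 / (real m)^2) * ((x \<bullet> ones_vec m) * (ones_vec m \<bullet> y))"
proof -
  have Cy: "(C *\<^sub>v y) $ a = (1 / real m) * y $ a - (1 / (real m)^2) * (\<Sum>b<m. y $ b)" if a: "a < m" for a
  proof -
    have "(C *\<^sub>v y) $ a = (\<Sum>b<m. ((1 / real m) * (if a = b then 1 else 0) - 1 / (real m)^2) * y $ b)"
      using a y unfolding C_def by (simp add: scalar_prod_def atLeast0LessThan)
    also have "\<dots> = (\<Sum>b<m. (if a = b then (1 / real m) * y $ b else 0) - (1 / (real m)^2) * y $ b)"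
      by (intro sum.cong refl) (auto simp: algebra_simps)
    also have "\<dots> = (1 / real m) * y $ a - (1 / (real m)^2) * (\<Sum>b<m. y $ b)"
      using a by (simp add: sum_subtractf sum_distrib_left)
    finally show ?thesis .
  qed
  have C: "C \<in> carrier_mat m m" unfolding C_def carrier_mat_def by simp
  have "x \<bullet> (C *\<^sub>v y) = (\<Sum>a<m. x $ a * ((1 / real m) * y $ a - (1 / (real m)^2) * (\<Sum>b<m. y $ b)))"
    using x y C Cy by (simp add: scalar_prod_def atLeast0LessThan)
  also have "\<dots> = (1 / real m) * (\<Sum>a<m. x $ a * y $ a) - (1 / (real m)^2) * ((\<Sum>a<m. x $ a) * (\<Sum>b<m. y $ b))"
  proof -
    define S where "S = (\<Sum>b<m. y $ b)"
    have "(\<Sum>a<m. x $ a * ((1 / real m) * y $ a - (1 / (real m)^2) * S)) =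
       (\<Sum>a<m. (1 / real m) * (x $ a * y $ a) - ((1 / (real m)^2) * S) * x $ a)"
      by (intro sum.cong refl) (simp add: algebra_simps)
    also have "\<dots> = (1 / real m) * (\<Sum>a<m. x $ a * y $ a) - ((1 / (real m)^2) * S) * (\<Sum>a<m. x $ a)"
      by (simp add: sum_subtractf sum_distrib_left)
    finally show ?thesis unfolding S_def by simp
  qed
  also have "\<dots> = (1 / real m) * (x \<bullet> y) - (1 / (real m)^2) * ((x \<bullet> ones_vec m) * (ones_vec m \<bullet> y))"
    using x y by (simp add: scalar_prod_def atLeast0LessThan ones_vec_def)
  finally show ?thesis .
qed

lemma ULU: assumes s: "s < m*n" and t: "t < m*n"
  shows "(transpose_mat U * Lambda_mat n m * U) $$ (s,t) = (if s = t \<and> s < K then 1 / real m else 0)"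
proof -
  have r: "(transpose_mat U * Lambda_mat n m * U) $$ (s,t) =
     col H (jj s) \<bullet> (blk (Lambda_mat n m) m (kk s) (kk t) *\<^sub>v col H (jj t))"
    by (rule UMU[OF Lam s t])
  note js = jj_lt[OF s] and jt = jj_lt[OF t]
  show ?thesis
  proof (cases "kk s = kk t")
    case True
    have "(transpose_mat U * Lambda_mat n m * U) $$ (s,t) = col H (jj s) \<bullet> (C *\<^sub>v col H (jj t))"
      unfolding r blk_Lam[OF kk_lt[OF s] kk_lt[OF t]] using True by simp
    also have "\<dots> = (1 / real m) * (if jj s = jj t then 1 else 0)
       - (1 / (real m)^2) * ((if jj s = 0 then sqrt m else 0) * (if jj t = 0 then sqrt m else 0))"
      unfolding C_dot[OF colH[OF js] colH[OF jt]] colH_dot[OF js jt] ones_dot[OF jt]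
      using comm_scalar_prod[OF colH[OF js], of "ones_vec m"] ones_dot[OF js]
      by (simp add: ones_vec_def)
    also have "\<dots> = (if s = t \<and> s < K then 1 / real m else 0)"
      using kj_inj[OF s t True] jj0[of s] jj0[of t] m
      by (auto simp: power2_eq_square)
    finally show ?thesis .
  next
    case False
    hence "s \<noteq> t" by auto
    thus ?thesis unfolding r blk_Lam[OF kk_lt[OF s] kk_lt[OF t]] using False
      by (simp add: zero_mv colH js jt)
  qed
qed

end

lemma prod_list_upt: "prod_list (map g [0..<N]) = prod g {..<N}"
  by (induction N) (auto simp: lessThan_Suc mult.commute)

lemma diag_of_carrier[simp]: "diag_of N f \<in> carrier_mat N N" unfolding diag_of_def by simp

lemma char_poly_diag: "char_poly (diag_of N f) = (\<Prod>a\<in>#image_mset f (mset_set {..<N}). [:- a, 1:])"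
proof -
  have ut: "upper_triangular (diag_of N f)" unfolding upper_triangular_def diag_of_def by auto
  have dm: "diag_mat (diag_of N f) = map f [0..<N]" unfolding diag_mat_def diag_of_def
    by (rule nth_equalityI) auto
  have "char_poly (diag_of N f) = prod_list (map (\<lambda>i. [:- f i, 1:]) [0..<N])"
    using char_poly_upper_triangular[OF diag_of_carrier ut] unfolding dm by (simp add: o_def)
  also have "\<dots> = (\<Prod>i<N. [:- f i, 1:])" by (rule prod_list_upt)
  also have "\<dots> = (\<Prod>a\<in>#image_mset f (mset_set {..<N}). [:- a, 1:])"
    unfolding prod_unfold_prod_mset by (simp add: multiset.map_comp o_def)
  finally show ?thesis .
qed

lemma diag_mult: "diag_of N f * diag_of N g = diag_of N (\<lambda>i. f i * g i)"
proof (rule eq_matI)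
  fix i j assume "i < dim_row (diag_of N (\<lambda>i. f i * g i))" "j < dim_col (diag_of N (\<lambda>i. f i * g i))"
  hence i: "i < N" and j: "j < N" unfolding diag_of_def by auto
  have "(diag_of N f * diag_of N g) $$ (i,j) = (\<Sum>k\<in>{0..<N}. (if i = k then f i else 0) * (if k = j then g k else 0))"
    using i j unfolding diag_of_def by (simp add: scalar_prod_def)
  also have "\<dots> = (\<Sum>k\<in>{0..<N}. if k = i then (if i = j then f i * g i else 0) else 0)"
    by (rule sum.cong, auto)
  also have "\<dots> = diag_of N (\<lambda>i. f i * g i) $$ (i,j)" using i j unfolding diag_of_def by simp
  finally show "(diag_of N f * diag_of N g) $$ (i,j) = diag_of N (\<lambda>i. f i * g i) $$ (i,j)" .
qed (auto simp: diag_of_def)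

lemma similar_char_poly:
  fixes W D P :: "real mat"
  assumes W: "W \<in> carrier_mat N N" and P: "P \<in> carrier_mat N N" and PP: "transpose_mat P * P = 1\<^sub>m N"
    and D: "transpose_mat P * W * P = D"
  shows "char_poly W = char_poly D"
proof -
  have PT: "transpose_mat P \<in> carrier_mat N N" using P by simp
  have PP': "P * transpose_mat P = 1\<^sub>m N" by (rule mat_mult_left_right_inverse[OF PT P PP])
  have Dc: "D \<in> carrier_mat N N" unfolding D[symmetric] using P W by simp
  have "P * D * transpose_mat P = (P * transpose_mat P) * W * (P * transpose_mat P)"
    unfolding D[symmetric] using P W PT by (simp add: assoc_mult_mat[of _ N N _ N _ N])
  hence eq: "W = P * D * transpose_mat P" unfolding PP' using W by simp
  have "similar_mat W D" by (rule similar_matI[of W D P "transpose_mat P" N], insert W Dc P PT PP PP' eq, auto)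
  thus ?thesis by (rule char_poly_similar)
qed

lemma sum_list_upt: "sum_list (map g [0..<N]) = sum g {..<N}"
  by (induction N) (auto simp: lessThan_Suc add.commute)

context vec_space
begin
lemma vec_as_sumlist:
  assumes x: "x \<in> carrier_vec n" and v: "\<forall>j<nn. v j \<in> carrier_vec n"
    and e: "\<forall>r<n. x $ r = (\<Sum>j<nn. c j * v j $ r)"
  shows "x = M.sumlist (map (\<lambda>j. c j \<cdot>\<^sub>v v j) [0..<nn])"
proof -
  have set: "set (map (\<lambda>j. c j \<cdot>\<^sub>v v j) [0..<nn]) \<subseteq> carrier_vec n" using v by auto
  show ?thesis
  proof (rule eq_vecI)
    fix r assume "r < dim_vec (M.sumlist (map (\<lambda>j. c j \<cdot>\<^sub>v v j) [0..<nn]))"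
    hence r: "r < n" using sumlist_carrier[OF set] by simp
    have "M.sumlist (map (\<lambda>j. c j \<cdot>\<^sub>v v j) [0..<nn]) $ r = sum_list (map (\<lambda>j. (c j \<cdot>\<^sub>v v j) $ r) [0..<nn])"
      by (subst sumlist_vec_index[OF _ r], insert set, auto simp: o_def)
    also have "\<dots> = (\<Sum>j<nn. c j * v j $ r)" unfolding sum_list_upt
      by (intro sum.cong refl, insert v r, auto)
    finally show "x $ r = M.sumlist (map (\<lambda>j. c j \<cdot>\<^sub>v v j) [0..<nn]) $ r" using e r by simp
  qed (insert x sumlist_carrier[OF set], auto)
qed
end

lemma span_transform:
  fixes p v :: "nat \<Rightarrow> real vec"
  assumes p: "\<forall>k<n. p k \<in> carrier_vec N" and v: "\<forall>j<n. v j \<in> carrier_vec N"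
    and pe: "\<forall>k<n. \<forall>r<N. p k $ r = (\<Sum>j<n. c j k * v j $ r)"
    and ve: "\<forall>j<n. \<forall>r<N. v j $ r = (\<Sum>k<n. c' j k * p k $ r)"
  shows "vspan N {p k | k. k < n} = vspan N {v k | k. k < n}"
proof -
  interpret vec_space "TYPE(real)" N .
  have vs: "vspan N X = span X" for X unfolding vspan_def ..
  have Pc: "{p k | k. k < n} \<subseteq> carrier_vec N" and Vc: "{v k | k. k < n} \<subseteq> carrier_vec N" using p v by auto
  have "span {p k | k. k < n} \<subseteq> span {v k | k. k < n}"
  proof (rule span_subsetI[OF Vc], standard)
    fix x assume "x \<in> {p k | k. k < n}"
    then obtain k where k: "k < n" and x: "x = p k" by auto
    have "x = M.sumlist (map (\<lambda>j. c j k \<cdot>\<^sub>v v j) [0..<n])"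
      unfolding x by (rule vec_as_sumlist, insert p v pe k, auto)
    also have "\<dots> \<in> span {v k | k. k < n}"
    proof (rule sumlist_in_span[OF Vc])
      fix y assume "y \<in> set (map (\<lambda>j. c j k \<cdot>\<^sub>v v j) [0..<n])"
      then obtain j where j: "j < n" and y: "y = c j k \<cdot>\<^sub>v v j" by auto
      show "y \<in> span {v k | k. k < n}" unfolding y
        by (rule smult_in_span[OF Vc], rule span_mem[OF Vc], insert j, auto)
    qed
    finally show "x \<in> span {v k | k. k < n}" .
  qed
  moreover have "span {v k | k. k < n} \<subseteq> span {p k | k. k < n}"
  proof (rule span_subsetI[OF Pc], standard)
    fix x assume "x \<in> {v k | k. k < n}"
    then obtain j where j: "j < n" and x: "x = v j" by auto
    have "x = M.sumlist (map (\<lambda>k. c' j k \<cdot>\<^sub>v p k) [0..<n])"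
      unfolding x by (rule vec_as_sumlist, insert p v ve j, auto)
    also have "\<dots> \<in> span {p k | k. k < n}"
    proof (rule sumlist_in_span[OF Pc])
      fix y assume "y \<in> set (map (\<lambda>k. c' j k \<cdot>\<^sub>v p k) [0..<n])"
      then obtain k where k: "k < n" and y: "y = c' j k \<cdot>\<^sub>v p k" by auto
      show "y \<in> span {p k | k. k < n}" unfolding y
        by (rule smult_in_span[OF Pc], rule span_mem[OF Pc], insert k, auto)
    qed
    finally show "x \<in> span {p k | k. k < n}" .
  qed
  ultimately show ?thesis unfolding vs by blast
qed

context blocks begin

lemma span_P:
  fixes Q1 Q2 :: "real mat"
  assumes Q1: "Q1 \<in> carrier_mat K K" and Q2: "Q2 \<in> carrier_mat n n" and QQ2: "transpose_mat Q2 * Q2 = 1\<^sub>m n"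
  shows "vspan (m*n) {col (U * four_block_mat Q1 (0\<^sub>m K n) (0\<^sub>m n K) Q2) (K + k) | k. k < n}
       = vspan (m*n) {kron_vec (unit_vec n k) (ones_vec m) | k. k < n}"
proof -
  define R where "R = four_block_mat Q1 (0\<^sub>m K n) (0\<^sub>m n K) Q2"
  define P where "P = U * R"
  have Rc: "R \<in> carrier_mat (m*n) (m*n)" unfolding R_def N_eq using Q1 Q2 by simp
  have Pc: "P \<in> carrier_mat (m*n) (m*n)" unfolding P_def using U Rc by simp
  define v where "v j = kron_vec (unit_vec n j) (ones_vec m)" for j
  define p where "p k = col P (K + k)" for k
  have onesc: "ones_vec m \<in> carrier_vec m" unfolding ones_vec_def by simp
  have pc: "\<forall>k<n. p k \<in> carrier_vec (m*n)"
  proof (intro allI impI)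
    fix k
    have "dim_vec (col P (K + k)) = m * n" using Pc by simp
    thus "p k \<in> carrier_vec (m*n)" unfolding p_def by (rule carrier_vecI)
  qed
  have vc: "\<forall>j<n. v j \<in> carrier_vec (m*n)" unfolding v_def using kron_unit_carrier[OF onesc] by blast
  have UK: "U $$ (r, K + j) = (1 / sqrt m) * v j $ r" if r: "r < m*n" and j: "j < n" for r j
  proof -
    have Kj: "K + j < m * n" using j N_eq by simp
    have "U $$ (r, K + j) = col U (K + j) $ r" using r Kj U by simp
    also have "\<dots> = kron_vec (unit_vec n j) (col H 0) $ r" unfolding colU[OF Kj] kk_K[OF j] jj_K ..
    also have "\<dots> = (1 / sqrt m) * v j $ r" unfolding v_def
      using kron_unit_index[OF colH[OF m] _ j, of r] kron_unit_index[OF onesc _ j, of r] r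
      using m by (simp add: mult.commute H0 ones_vec_def)
    finally show ?thesis .
  qed
  have PK: "P $$ (r, K + k) = (\<Sum>j<n. U $$ (r, K + j) * Q2 $$ (j, k))" if r: "r < m*n" and k: "k < n" for r k
  proof -
    have "P $$ (r, K + k) = (\<Sum>s<K + n. U $$ (r, s) * R $$ (s, K + k))"
      unfolding P_def using U Rc r k N_eq by (simp add: scalar_prod_def atLeast0LessThan)
    also have "\<dots> = (\<Sum>s<K. U $$ (r, s) * R $$ (s, K + k)) + (\<Sum>j<n. U $$ (r, K + j) * R $$ (K + j, K + k))"
      by (rule sum_split_add)
    also have "(\<Sum>s<K. U $$ (r, s) * R $$ (s, K + k)) = 0"
      by (rule sum.neutral, insert Q1 Q2 k, auto simp: R_def)
    also have "(\<Sum>j<n. U $$ (r, K + j) * R $$ (K + j, K + k)) = (\<Sum>j<n. U $$ (r, K + j) * Q2 $$ (j, k))"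
      by (rule sum.cong, insert Q1 Q2 k, auto simp: R_def)
    finally show ?thesis by simp
  qed
  have QQ2': "Q2 * transpose_mat Q2 = 1\<^sub>m n"
    by (rule mat_mult_left_right_inverse[OF _ Q2 QQ2], insert Q2, simp)
  have Qrow: "(\<Sum>k<n. Q2 $$ (j, k) * Q2 $$ (i, k)) = (if i = j then 1 else 0)" if "i < n" "j < n" for i j
  proof -
    have "(Q2 * transpose_mat Q2) $$ (j, i) = (\<Sum>k<n. Q2 $$ (j, k) * Q2 $$ (i, k))"
      using that Q2 by (simp add: scalar_prod_def atLeast0LessThan)
    thus ?thesis unfolding QQ2' using that by auto
  qed
  have pe: "\<forall>k<n. \<forall>r<m*n. p k $ r = (\<Sum>j<n. (Q2 $$ (j, k) / sqrt m) * v j $ r)"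
  proof (intro allI impI)
    fix k r assume k: "k < n" and r: "r < m*n"
    have "p k $ r = P $$ (r, K + k)" unfolding p_def using Pc r k N_eq by simp
    also have "\<dots> = (\<Sum>j<n. (Q2 $$ (j, k) / sqrt m) * v j $ r)" unfolding PK[OF r k]
      by (rule sum.cong, auto simp: UK[OF r])
    finally show "p k $ r = (\<Sum>j<n. (Q2 $$ (j, k) / sqrt m) * v j $ r)" .
  qed
  have ve: "\<forall>j<n. \<forall>r<m*n. v j $ r = (\<Sum>k<n. (sqrt m * Q2 $$ (j, k)) * p k $ r)"
  proof (intro allI impI)
    fix j r assume j: "j < n" and r: "r < m*n"
    have "(\<Sum>k<n. (sqrt m * Q2 $$ (j, k)) * p k $ r) = (\<Sum>k<n. \<Sum>i<n. sqrt m * Q2 $$ (j, k) * (U $$ (r, K + i) * Q2 $$ (i, k)))"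
      by (rule sum.cong, simp, subst p_def, insert Pc r N_eq, auto simp: PK[OF r] sum_distrib_left)
    also have "\<dots> = (\<Sum>i<n. \<Sum>k<n. sqrt m * Q2 $$ (j, k) * (U $$ (r, K + i) * Q2 $$ (i, k)))"
      by (rule sum.swap)
    also have "\<dots> = (\<Sum>i<n. sqrt m * U $$ (r, K + i) * (\<Sum>k<n. Q2 $$ (j, k) * Q2 $$ (i, k)))"
      by (rule sum.cong, simp, simp add: sum_distrib_left mult_ac)
    also have "\<dots> = (\<Sum>i<n. if i = j then sqrt m * U $$ (r, K + i) else 0)"
      by (rule sum.cong, simp, simp add: Qrow j)
    also have "\<dots> = sqrt m * U $$ (r, K + j)" using j by simp
    also have "\<dots> = v j $ r" unfolding UK[OF r j] using m by simp
    finally show "v j $ r = (\<Sum>k<n. (sqrt m * Q2 $$ (j, k)) * p k $ r)" ..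
  qed
  have "vspan (m*n) {p k | k. k < n} = vspan (m*n) {v k | k. k < n}"
    by (rule span_transform[OF pc vc pe ve])
  thus ?thesis unfolding p_def v_def P_def R_def .
qed

end

theorem lemma2:
  fixes n m :: nat and W :: "real mat" and lam :: "nat \<Rightarrow> nat \<Rightarrow> real"
  assumes n: "n \<ge> 1" and m: "m \<ge> 2"
    and W: "W \<in> carrier_mat (m * n) (m * n)"
    and S: "\<forall>i<n. blk W m i i = 0\<^sub>m m m"
    and A1: "transpose_mat W = W"
    and A2: "\<forall>i<n. \<forall>k<n. blk W m i k *\<^sub>v ones_vec m = lam i k \<cdot>\<^sub>v ones_vec m"
    and A3: "\<forall>i<n. \<forall>k<n. lam i k = lam k i"
  shows "\<exists>P \<mu>.
     P \<in> carrier_mat (m * n) (m * n) \<and> transpose_mat P * P = 1\<^sub>m (m * n) \<and>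
     \<comment> \<open>(i)\<close>
     vspan (m * n) {col P ((m - 1) * n + k) | k. k < n}
       = vspan (m * n) {kron_vec (unit_vec n k) (ones_vec m) | k. k < n} \<and>
     \<comment> \<open>(ii)\<close>
     transpose_mat P * W * Lambda_mat n m * P
       = (1 / real m) \<cdot>\<^sub>m diag_of (m * n) (\<lambda>i. if i < (m - 1) * n then \<mu> i else 0) \<and>
     \<comment> \<open>(iii)\<close>
     transpose_mat P * Lambda_mat n m * P
       = (1 / real m) \<cdot>\<^sub>m diag_of (m * n) (\<lambda>i. if i < (m - 1) * n then 1 else 0) \<and>
     \<comment> \<open>(iv)\<close>
     transpose_mat P * W * P = diag_of (m * n) \<mu> \<and>
     \<comment> \<open>description of the \<mu>'s\<close>
     (\<forall>i j. i \<le> j \<and> j < (m - 1) * n \<longrightarrow> \<mu> j \<le> \<mu> i) \<and>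
     (\<forall>i j. (m - 1) * n \<le> i \<and> i \<le> j \<and> j < m * n \<longrightarrow> \<mu> j \<le> \<mu> i) \<and>
     eigvals_mset (W * Lambda_mat n m)
       (image_mset (\<lambda>i. \<mu> i / real m) (mset_set {..<(m - 1) * n}) + replicate_mset n 0) \<and>
     eigvals_mset W (image_mset \<mu> (mset_set {..<m * n}))"
proof -
  have m0: "m > 0" using m by simp
  define u where "u = (1 / sqrt m) \<cdot>\<^sub>v ones_vec m"
  have u: "u \<in> carrier_vec m" unfolding u_def ones_vec_def by simp
  have uu: "u \<bullet> u = 1"
  proof -
    have "u \<bullet> u = (\<Sum>i<m. (1 / sqrt m) * (1 / sqrt m))"
      unfolding u_def ones_vec_def by (simp add: scalar_prod_def atLeast0LessThan)
    also have "\<dots> = 1" using m0 by (simp add: real_sqrt_mult[symmetric])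
    finally show ?thesis .
  qed
  obtain H where H: "H \<in> carrier_mat m m" and HH: "transpose_mat H * H = 1\<^sub>m m" and H0: "col H 0 = u"
    using householder[OF u m0 uu] by auto
  interpret blocks n m H by (unfold_locales, insert m0 H HH H0, auto simp: u_def)
  define N where "N = m * n"
  have NK: "N = K + n" unfolding N_def by (rule N_eq)
  have KN: "(m - 1) * n = K" unfolding K_def ..
  define M where "M = transpose_mat U * W * U"
  have Mc: "M \<in> carrier_mat N N" unfolding M_def N_def using U W by simp
  have Msym: "transpose_mat M = M" unfolding M_def by (rule sym_conj[OF U W A1])
  define A where "A = mat K K (\<lambda>(i,j). M $$ (i,j))"
  define B where "B = mat n n (\<lambda>(i,j). M $$ (K + i, K + j))"
  have Ac: "A \<in> carrier_mat K K" and Bc: "B \<in> carrier_mat n n" unfolding A_def B_def by auto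
  have Msym': "M $$ (i,j) = M $$ (j,i)" if "i < N" "j < N" for i j
  proof -
    have "M $$ (i,j) = transpose_mat M $$ (i,j)" using Msym by simp
    thus ?thesis using that Mc by simp
  qed
  have Asym: "transpose_mat A = A" unfolding A_def
    by (rule eq_matI, auto simp: NK intro!: Msym')
  have Bsym: "transpose_mat B = B" unfolding B_def
    by (rule eq_matI, auto simp: NK intro!: Msym')
  have Mb: "M = four_block_mat A (0\<^sub>m K n) (0\<^sub>m n K) B"
  proof (rule eq_matI)
    fix i j assume "i < dim_row (four_block_mat A (0\<^sub>m K n) (0\<^sub>m n K) B)"
      "j < dim_col (four_block_mat A (0\<^sub>m K n) (0\<^sub>m n K) B)"
    hence i: "i < N" and j: "j < N" using Ac Bc NK by auto
    have z1: "M $$ (i,j) = 0" if "i < K" "\<not> j < K"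
      using UWU_zero(1)[OF W A1 A2 that(1) that(2)] j unfolding M_def N_def by simp
    have z2: "M $$ (i,j) = 0" if "j < K" "\<not> i < K"
      using UWU_zero(2)[OF W A1 A2 that(1) that(2)] i unfolding M_def N_def by simp
    show "M $$ (i,j) = four_block_mat A (0\<^sub>m K n) (0\<^sub>m n K) B $$ (i,j)"
      using i j Ac Bc z1 z2 NK unfolding A_def B_def by auto
  qed (insert Mc Ac Bc NK, auto)
  obtain Q1 d1 where Q1: "Q1 \<in> carrier_mat K K" and QQ1: "transpose_mat Q1 * Q1 = 1\<^sub>m K"
    and QAQ1: "transpose_mat Q1 * A * Q1 = diag_of K d1" and d1: "\<forall>i j. i \<le> j \<and> j < K \<longrightarrow> d1 j \<le> d1 i"
    using spectral_sorted[OF Ac Asym] by blast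
  obtain Q2 d2 where Q2: "Q2 \<in> carrier_mat n n" and QQ2: "transpose_mat Q2 * Q2 = 1\<^sub>m n"
    and QAQ2: "transpose_mat Q2 * B * Q2 = diag_of n d2" and d2: "\<forall>i j. i \<le> j \<and> j < n \<longrightarrow> d2 j \<le> d2 i"
    using spectral_sorted[OF Bc Bsym] by blast
  define R where "R = four_block_mat Q1 (0\<^sub>m K n) (0\<^sub>m n K) Q2"
  have Rc: "R \<in> carrier_mat N N" unfolding R_def NK using Q1 Q2 by simp
  have RT: "transpose_mat R = four_block_mat (transpose_mat Q1) (0\<^sub>m K n) (0\<^sub>m n K) (transpose_mat Q2)"
    unfolding R_def by (rule bd_transpose[OF Q1 Q2])
  define P where "P = U * R"
  have Uc: "U \<in> carrier_mat N N" using U unfolding N_def .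
  have Pc: "P \<in> carrier_mat N N" unfolding P_def using Uc Rc by simp
  have PT: "transpose_mat P = transpose_mat R * transpose_mat U"
    unfolding P_def by (rule transpose_mult[OF Uc Rc])
  have conj: "transpose_mat P * X * P = transpose_mat R * (transpose_mat U * X * U) * R"
    if X: "X \<in> carrier_mat N N" for X
    unfolding PT unfolding P_def using Uc Rc X by (simp add: assoc_mult_mat[of _ N N _ N _ N])
  have RR: "transpose_mat R * R = 1\<^sub>m N"
  proof -
    have "transpose_mat R * R = four_block_mat (transpose_mat Q1 * Q1) (0\<^sub>m K n) (0\<^sub>m n K) (transpose_mat Q2 * Q2)"
      unfolding RT unfolding R_def by (rule bd_mult, insert Q1 Q2, auto)
    thus ?thesis unfolding QQ1 QQ2 NK by simp
  qed
  have PP: "transpose_mat P * P = 1\<^sub>m N"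
  proof -
    have "transpose_mat P * P = transpose_mat P * 1\<^sub>m N * P" using Pc by simp
    also have "\<dots> = transpose_mat R * (transpose_mat U * U) * R" unfolding conj[OF one_carrier_mat]
      using Uc by simp
    also have "\<dots> = 1\<^sub>m N" using UU RR Rc unfolding N_def[symmetric] by simp
    finally show ?thesis .
  qed
  define \<mu> where "\<mu> = (\<lambda>i. if i < K then d1 i else d2 (i - K))"
  have PWP: "transpose_mat P * W * P = diag_of N \<mu>"
  proof -
    have "transpose_mat P * W * P = transpose_mat R * M * R" unfolding conj[OF W[folded N_def]] M_def ..
    also have "\<dots> = four_block_mat (transpose_mat Q1 * A * Q1) (0\<^sub>m K n) (0\<^sub>m n K) (transpose_mat Q2 * B * Q2)"
      unfolding RT Mb unfolding R_def
      using bd_mult[of "transpose_mat Q1" K "transpose_mat Q2" n A B]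
        bd_mult[of "transpose_mat Q1 * A" K "transpose_mat Q2 * B" n Q1 Q2] Q1 Q2 Ac Bc by simp
    also have "\<dots> = diag_of N \<mu>" unfolding QAQ1 QAQ2 bd_diag NK \<mu>_def ..
    finally show ?thesis .
  qed
  define Dg where "Dg = diag_of N (\<lambda>i. if i < K then 1 else 0)"
  have Dgb: "Dg = four_block_mat (1\<^sub>m K) (0\<^sub>m K n) (0\<^sub>m n K) (0\<^sub>m n n)"
    unfolding Dg_def NK by (rule eq_matI, auto simp: diag_of_def)
  have ULU': "transpose_mat U * Lambda_mat n m * U = (1 / real m) \<cdot>\<^sub>m Dg"
  proof (rule eq_matI)
    fix i j assume "i < dim_row ((1 / real m) \<cdot>\<^sub>m Dg)" "j < dim_col ((1 / real m) \<cdot>\<^sub>m Dg)"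
    hence i: "i < m * n" and j: "j < m * n" unfolding Dg_def N_def diag_of_def by auto
    show "(transpose_mat U * Lambda_mat n m * U) $$ (i,j) = ((1 / real m) \<cdot>\<^sub>m Dg) $$ (i,j)"
      unfolding ULU[OF i j] using i j by (simp add: Dg_def N_def diag_of_def)
  qed (insert U Lam, auto simp: Dg_def N_def diag_of_def)
  have Lc: "Lambda_mat n m \<in> carrier_mat N N" using Lam unfolding N_def .
  have Dgc: "Dg \<in> carrier_mat N N" unfolding Dg_def by simp
  have PLP: "transpose_mat P * Lambda_mat n m * P = (1 / real m) \<cdot>\<^sub>m Dg"
  proof -
    have "transpose_mat P * Lambda_mat n m * P = transpose_mat R * ((1 / real m) \<cdot>\<^sub>m Dg) * R"
      unfolding conj[OF Lc] ULU' ..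
    also have "\<dots> = (1 / real m) \<cdot>\<^sub>m (transpose_mat R * Dg * R)"
      using Rc Dgc by (simp add: mult_smult_distrib mult_smult_assoc_mat[of _ N N])
    also have "transpose_mat R * Dg * R = four_block_mat (transpose_mat Q1 * 1\<^sub>m K * Q1) (0\<^sub>m K n) (0\<^sub>m n K) (transpose_mat Q2 * 0\<^sub>m n n * Q2)"
      unfolding RT Dgb unfolding R_def
      using bd_mult[of "transpose_mat Q1" K "transpose_mat Q2" n "1\<^sub>m K" "0\<^sub>m n n"]
        bd_mult[of "transpose_mat Q1 * 1\<^sub>m K" K "transpose_mat Q2 * 0\<^sub>m n n" n Q1 Q2] Q1 Q2 by simp
    also have "\<dots> = Dg" unfolding Dgb using Q1 Q2 QQ1 by simp
    finally show ?thesis .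
  qed
  have PP': "P * transpose_mat P = 1\<^sub>m N"
    by (rule mat_mult_left_right_inverse[OF _ Pc PP], insert Pc, simp)
  have PWLP: "transpose_mat P * W * Lambda_mat n m * P = (1 / real m) \<cdot>\<^sub>m diag_of N (\<lambda>i. if i < K then \<mu> i else 0)"
  proof -
    have "transpose_mat P * W * Lambda_mat n m * P = transpose_mat P * W * (P * transpose_mat P) * Lambda_mat n m * P"
      unfolding PP' using Pc W Lc unfolding N_def by simp
    also have "\<dots> = (transpose_mat P * W * P) * (transpose_mat P * Lambda_mat n m * P)"
      using Pc W Lc unfolding N_def by (simp add: assoc_mult_mat[of _ "m*n" "m*n" _ "m*n" _ "m*n"])
    also have "\<dots> = diag_of N \<mu> * ((1 / real m) \<cdot>\<^sub>m Dg)" unfolding PWP PLP ..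
    also have "\<dots> = (1 / real m) \<cdot>\<^sub>m (diag_of N \<mu> * Dg)" using Dgc by (simp add: mult_smult_distrib[of _ N N])
    also have "diag_of N \<mu> * Dg = diag_of N (\<lambda>i. if i < K then \<mu> i else 0)"
      unfolding Dg_def diag_mult by (rule arg_cong[of _ _ "diag_of N"], auto)
    finally show ?thesis .
  qed
  have span: "vspan N {col P (K + k) | k. k < n} = vspan N {kron_vec (unit_vec n k) (ones_vec m) | k. k < n}"
    unfolding P_def R_def N_def by (rule span_P[OF Q1 Q2 QQ2])
  have eig1: "eigvals_mset W (image_mset \<mu> (mset_set {..<N}))"
    unfolding eigvals_mset_def char_poly_diag[symmetric]
    by (rule similar_char_poly[OF W[folded N_def] Pc PP PWP])
  have WLc: "W * Lambda_mat n m \<in> carrier_mat N N" using W Lc unfolding N_def by simp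
  have "transpose_mat P * (W * Lambda_mat n m) * P = diag_of N (\<lambda>i. if i < K then \<mu> i / real m else 0)"
  proof -
    have "transpose_mat P * (W * Lambda_mat n m) * P = transpose_mat P * W * Lambda_mat n m * P"
      using Pc W Lc unfolding N_def by (simp add: assoc_mult_mat[of _ "m*n" "m*n" _ "m*n" _ "m*n"])
    also have "\<dots> = diag_of N (\<lambda>i. if i < K then \<mu> i / real m else 0)" unfolding PWLP
      by (rule eq_matI, auto simp: diag_of_def)
    finally show ?thesis .
  qed
  hence "char_poly (W * Lambda_mat n m) = char_poly (diag_of N (\<lambda>i. if i < K then \<mu> i / real m else 0))"
    by (rule similar_char_poly[OF WLc Pc PP])
  moreover have "image_mset (\<lambda>i. if i < K then \<mu> i / real m else 0) (mset_set {..<N})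
      = image_mset (\<lambda>i. \<mu> i / real m) (mset_set {..<K}) + replicate_mset n 0"
  proof -
    have seq: "{..<N} = {..<K} \<union> {K..<K+n}" unfolding NK by auto
    have "mset_set {..<N} = mset_set {..<K} + mset_set {K..<K+n}"
      unfolding seq by (rule mset_set_Union) auto
    moreover have "image_mset (\<lambda>i. if i < K then \<mu> i / real m else 0) (mset_set {..<K}) = image_mset (\<lambda>i. \<mu> i / real m) (mset_set {..<K})"
      by (rule image_mset_cong) simp
    moreover have "image_mset (\<lambda>i. if i < K then \<mu> i / real m else 0) (mset_set {K..<K+n}) = replicate_mset n 0"
    proof -
      have "image_mset (\<lambda>i. if i < K then \<mu> i / real m else 0) (mset_set {K..<K+n}) = image_mset (\<lambda>_. 0) (mset_set {K..<K+n})"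
        by (rule image_mset_cong) simp
      thus ?thesis by (simp add: image_mset_const_eq)
    qed
    ultimately show ?thesis by simp
  qed
  ultimately have eig2: "eigvals_mset (W * Lambda_mat n m) (image_mset (\<lambda>i. \<mu> i / real m) (mset_set {..<K}) + replicate_mset n 0)"
    unfolding eigvals_mset_def char_poly_diag by simp
  have mono1: "\<forall>i j. i \<le> j \<and> j < K \<longrightarrow> \<mu> j \<le> \<mu> i" using d1 unfolding \<mu>_def by auto
  have mono2: "\<forall>i j. K \<le> i \<and> i \<le> j \<and> j < N \<longrightarrow> \<mu> j \<le> \<mu> i"
  proof (intro allI impI)
    fix i j assume ij: "K \<le> i \<and> i \<le> j \<and> j < N"
    hence "i - K \<le> j - K \<and> j - K < n" using NK by auto
    hence "d2 (j - K) \<le> d2 (i - K)" using d2 by blast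
    thus "\<mu> j \<le> \<mu> i" using ij unfolding \<mu>_def by auto
  qed
  have PWLP': "transpose_mat P * W * Lambda_mat n m * P = (1 / real m) \<cdot>\<^sub>m diag_of N (\<lambda>i. if i < K then \<mu> i else 0)"
    by (rule PWLP)
  show ?thesis unfolding KN N_def[symmetric]
    by (rule exI[of _ P], rule exI[of _ \<mu>], insert Pc PP span PWLP PLP PWP mono1 mono2 eig1 eig2, unfold Dg_def, auto)
qed

end
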